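(* Let $m\ge1$, $G(x)=-x^3$, and let $F(x)=|x^h|^2$. Let $(\widetilde\varrho_\varepsilon)_{0<\varepsilon\le1}$ be positive functions on $\Omega=\mathbb R^2\times\,]0,1[$ solving $\Pi(\widetilde\varrho_\varepsilon)=\varepsilon^{2(m-1)}F+\varepsilon^mG$ on $\Omega$. Then for every $l>0$ there exists a constant $C(l)>1$ such that for all $\varepsilon\in\,]0,1]$ one has $\widetilde\varrho_\varepsilon\le C(l)$ on $\overline{\mathbb B}_l$, where $\mathbb B_l:=\{x\in\Omega:|x^h|<l\}$. If instead $F\equiv0$ (and $\widetilde\varrho_\varepsilon$ solve $\Pi(\widetilde\varrho_\varepsilon)=\varepsilon^mG$), then there exists a constant $C>1$ such that $|\widetilde\varrho_\varepsilon(x)|\le C$ for all $\varepsilon\in\,]0,1]$ and all $x\in\Omega$.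
   Context: Points of $\Omega$ are $x=(x^h,x^3)$ with $x^h\in\mathbb R^2$. The pressure is $p(\varrho,\vartheta)=\vartheta^{5/2}P(\varrho/\vartheta^{3/2})+\frac a3\vartheta^4$ with $a>0$, where $P\in C^1([0,\infty))\cap C^2(]0,\infty[)$, $P(0)=0$, $P'(Z)>0$ for all $Z\ge0$, $0<\big(\frac53P(Z)-P'(Z)Z\big)/Z<c$ for all $Z>0$, and $\lim_{Z\to+\infty}P(Z)/Z^{5/3}=P_\infty>0$. Fix a constant $\overline\vartheta>0$ and set $\Pi(\varrho):=\int_1^\varrho\frac{\partial_\varrho p(z,\overline\vartheta)}{z}dz$ for $\varrho>0$. *)

theory Defs
  imports "HOL-Analysis.Analysis"
begin

text \<open>Points of Omega are pairs (xh, x3) with xh in R^2 (as real * real, Euclidean norm).\<close>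
definition Omega :: "((real \<times> real) \<times> real) set" where
  "Omega = {x. 0 < snd x \<and> snd x < 1}"

definition Bl :: "real \<Rightarrow> ((real \<times> real) \<times> real) set" where
  "Bl l = {x \<in> Omega. norm (fst x) < l}"

definition pressure :: "(real \<Rightarrow> real) \<Rightarrow> real \<Rightarrow> real \<Rightarrow> real \<Rightarrow> real" where
  "pressure P a rho theta = theta powr (5/2) * P (rho / theta powr (3/2)) + a / 3 * theta ^ 4"

definition Pi_fun :: "(real \<Rightarrow> real) \<Rightarrow> real \<Rightarrow> real \<Rightarrow> real \<Rightarrow> real" where
  "Pi_fun P a thetabar rho =
     (let g = (\<lambda>z. deriv (\<lambda>r. pressure P a r thetabar) z / z) in
      if 1 \<le> rho then integral {1..rho} g else - integral {rho..1} g)"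

end

theory Submission imports Defs begin

lemma Pi_lower:
  fixes P P' :: "real \<Rightarrow> real" and a thetabar rho :: real
  assumes thetabar_pos: "thetabar > 0"
    and P_C1: "\<forall>Z\<ge>0. (P has_real_derivative P' Z) (at Z within {0..})"
    and P'_cont: "continuous_on {0..} P'"
    and P'_pos: "\<forall>Z\<ge>0. P' Z > 0"
    and r1: "rho \<ge> 1"
  defines "k \<equiv> thetabar powr (3/2)"
  defines "A \<equiv> thetabar powr (5/2) / k"
  shows "Pi_fun P a thetabar rho \<ge> 0 \<and>
         Pi_fun P a thetabar rho \<ge> A * k / rho * (P (rho/k) - P (1/k))"
proof -
  have kpos: "k > 0" and Apos: "A > 0" using thetabar_pos by (auto simp: k_def A_def)
  have dP: "(P has_real_derivative P' Z) (at Z)" if "Z > 0" for Z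
  proof -
    have "at Z within {0..} = at Z"
      by (rule at_within_interior) (use that in auto)
    moreover have "(P has_real_derivative P' Z) (at Z within {0..})" using P_C1 that by auto
    ultimately show ?thesis by simp
  qed
  have dp: "((\<lambda>r. pressure P a r thetabar) has_real_derivative A * P' (z/k)) (at z)" if "z > 0" for z
  proof -
    have "((\<lambda>r. P (r / k)) has_real_derivative P' (z/k) * (1/k)) (at z)"
      by (rule DERIV_chain2[where f=P and g="\<lambda>r. r/k"], rule dP) (use kpos that in \<open>auto intro!: derivative_eq_intros\<close>)
    hence "((\<lambda>r. thetabar powr (5/2) * P (r / k) + a / 3 * thetabar ^ 4) has_real_derivative
            thetabar powr (5/2) * (P' (z/k) * (1/k)) + 0) (at z)"
      by (intro DERIV_add DERIV_cmult DERIV_const)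
    thus ?thesis unfolding pressure_def k_def A_def by simp
  qed
  define g where "g = (\<lambda>z. deriv (\<lambda>r. pressure P a r thetabar) z / z)"
  define g2 where "g2 = (\<lambda>z. A * P' (z/k) / z)"
  have geq: "g z = g2 z" if "z \<ge> 1" for z
    using DERIV_imp_deriv[OF dp, of z] that unfolding g_def g2_def by simp
  have Pi_eq: "Pi_fun P a thetabar rho = integral {1..rho} g2"
    unfolding Pi_fun_def Let_def using r1 g_def geq
    by (auto intro!: integral_cong)
  have cP': "continuous_on {1..rho} (\<lambda>z. P' (z/k))"
    by (rule continuous_on_compose2[OF P'_cont]) (use kpos in \<open>auto intro!: continuous_intros\<close>)
  have int2: "g2 integrable_on {1..rho}"
    unfolding g2_def
    by (rule integrable_continuous_interval) (auto intro!: continuous_intros cP')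
  have nn: "0 \<le> integral {1..rho} g2"
  proof (rule integral_nonneg[OF int2])
    fix z assume z: "z \<in> {1..rho}"
    have "P' (z/k) > 0" using P'_pos kpos z by auto
    thus "0 \<le> g2 z" using Apos z by (auto simp: g2_def)
  qed
  have FT: "((\<lambda>z. P' (z/k)) has_integral (k * P (rho/k) - k * P (1/k))) {1..rho}"
  proof (rule fundamental_theorem_of_calculus[OF r1])
    fix z assume z: "z \<in> {1..rho}"
    have "((\<lambda>r. k * P (r / k)) has_real_derivative k * (P' (z/k) * (1/k))) (at z)"
      by (intro DERIV_cmult DERIV_chain2[where f=P and g="\<lambda>r. r/k"], rule dP) (use kpos z in \<open>auto intro!: derivative_eq_intros\<close>)
    hence "((\<lambda>r. k * P (r / k)) has_real_derivative P' (z/k)) (at z within {1..rho})"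
      using kpos by (auto intro: has_field_derivative_at_within)
    thus "((\<lambda>r. k * P (r / k)) has_vector_derivative P' (z/k)) (at z within {1..rho})"
      by (simp add: has_real_derivative_iff_has_vector_derivative)
  qed
  have FT2: "((\<lambda>z. (A / rho) * P' (z/k)) has_integral ((A/rho) * (k * P (rho/k) - k * P (1/k)))) {1..rho}"
    by (rule has_integral_mult_right[OF FT])
  have le: "integral {1..rho} (\<lambda>z. (A / rho) * P' (z/k)) \<le> integral {1..rho} g2"
  proof (rule integral_le)
    show "(\<lambda>z. A / rho * P' (z / k)) integrable_on {1..rho}" using FT2 by blast
    show "g2 integrable_on {1..rho}" by (rule int2)
    fix z assume z: "z \<in> {1..rho}"
    have p: "A * P' (z/k) > 0" using Apos P'_pos kpos z by auto
    have "A * P' (z/k) / rho \<le> A * P' (z/k) / z"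
      by (rule divide_left_mono) (use p z in auto)
    thus "A / rho * P' (z / k) \<le> g2 z" unfolding g2_def by simp
  qed
  have "integral {1..rho} (\<lambda>z. (A / rho) * P' (z/k)) = A * k / rho * (P (rho/k) - P (1/k))"
    using integral_unique[OF FT2] by (simp add: algebra_simps)
  thus ?thesis using le nn Pi_eq by linarith
qed

lemma Pi_grow:
  fixes P P' :: "real \<Rightarrow> real" and a thetabar Pinf K :: real
  assumes thetabar_pos: "thetabar > 0"
    and P_C1: "\<forall>Z\<ge>0. (P has_real_derivative P' Z) (at Z within {0..})"
    and P'_cont: "continuous_on {0..} P'"
    and P'_pos: "\<forall>Z\<ge>0. P' Z > 0"
    and P_inf: "Pinf > 0" "((\<lambda>Z. P Z / Z powr (5/3)) \<longlongrightarrow> Pinf) at_top"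
  shows "\<exists>R\<ge>1. \<forall>rho\<ge>R. Pi_fun P a thetabar rho > K"
proof -
  define k where "k = thetabar powr (3/2)"
  define A where "A = thetabar powr (5/2) / k"
  have kpos: "k > 0" and Apos: "A > 0" using thetabar_pos by (auto simp: k_def A_def)
  define L where "L = (\<lambda>u. (- (A * P (1/k)) / u) + (A * (P u / u powr (5/3))) * u powr (2/3))"
  have e23: "LIM u at_top. exp ((2/3) * ln (u::real)) :> at_top"
    by (rule filterlim_compose[OF exp_at_top filterlim_tendsto_pos_mult_at_top[OF tendsto_const _ ln_at_top]]) simp
  have pw23: "LIM u at_top. (u::real) powr (2/3) :> at_top"
    by (rule filterlim_at_top_mono[OF e23]) (auto simp: powr_def eventually_at_top_dense intro!: exI[of _ 0])
  have "filterlim L at_top at_top"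
    unfolding L_def
  proof (rule filterlim_tendsto_add_at_top)
    show "((\<lambda>u. - (A * P (1 / k)) / u) \<longlongrightarrow> 0) at_top"
      by (rule tendsto_divide_0[OF tendsto_const filterlim_at_top_imp_at_infinity[OF filterlim_ident]])
    show "LIM u at_top. A * (P u / u powr (5 / 3)) * u powr (2 / 3) :> at_top"
      by (rule filterlim_tendsto_pos_mult_at_top[OF tendsto_mult[OF tendsto_const P_inf(2)]])
         (use Apos P_inf(1) pw23 in simp_all)
  qed
  hence "eventually (\<lambda>u. L u > K) at_top"
    by (simp add: filterlim_at_top_dense)
  then obtain U where U: "\<And>u. u \<ge> U \<Longrightarrow> L u > K"
    by (auto simp: eventually_at_top_linorder)
  define R where "R = max 1 (k * max U 1)"
  show ?thesis
  proof (intro exI[of _ R] conjI allI impI)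
    show "1 \<le> R" by (simp add: R_def)
    fix rho assume r: "R \<le> rho"
    have r1: "rho \<ge> 1" using r by (simp add: R_def)
    define u where "u = rho / k"
    have "k * max U 1 \<le> rho" using r by (simp add: R_def)
    hence uU: "u \<ge> max U 1" unfolding u_def pos_le_divide_eq[OF kpos] by (metis mult.commute)
    hence upos: "u > 0" by simp
    have pw: "u powr (5/3) = u powr (2/3) * u"
    proof -
      have "u powr (2/3) * u = u powr (2/3) * u powr 1" using upos by simp
      also have "\<dots> = u powr (2/3 + 1)" by (simp only: powr_add)
      also have "(2/3 + 1 :: real) = 5/3" by simp
      finally show ?thesis by simp
    qed
    have "L u = A * k / rho * (P (rho/k) - P (1/k))"
      unfolding L_def u_def using upos kpos r1 pw[unfolded u_def]
      by (simp add: field_simps)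
    moreover have "L u > K" using U uU by simp
    moreover have "Pi_fun P a thetabar rho \<ge> A * k / rho * (P (rho/k) - P (1/k))"
      using Pi_lower[OF thetabar_pos P_C1 P'_cont P'_pos r1] unfolding A_def k_def by simp
    ultimately show "Pi_fun P a thetabar rho > K" by simp
  qed
qed

theorem lemma2p3:
  fixes P P' P'' :: "real \<Rightarrow> real" and a thetabar c Pinf m :: real
  assumes a_pos: "a > 0"
    and thetabar_pos: "thetabar > 0"
    and P_C1: "\<forall>Z\<ge>0. (P has_real_derivative P' Z) (at Z within {0..})"
    and P'_cont: "continuous_on {0..} P'"
    and P_C2: "\<forall>Z>0. (P' has_real_derivative P'' Z) (at Z)"
    and P''_cont: "continuous_on {0<..} P''"
    and P0: "P 0 = 0"
    and P'_pos: "\<forall>Z\<ge>0. P' Z > 0"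
    and P_bounds: "\<forall>Z>0. 0 < (5/3 * P Z - P' Z * Z) / Z \<and> (5/3 * P Z - P' Z * Z) / Z < c"
    and P_inf: "Pinf > 0" "((\<lambda>Z. P Z / Z powr (5/3)) \<longlongrightarrow> Pinf) at_top"
    and m_ge: "m \<ge> 1"
  shows
   "(\<forall>rho :: real \<Rightarrow> (real \<times> real) \<times> real \<Rightarrow> real.
       (\<forall>\<epsilon>\<in>{0<..1}. \<forall>x\<in>Omega. rho \<epsilon> x > 0 \<and>
          Pi_fun P a thetabar (rho \<epsilon> x) =
            \<epsilon> powr (2 * (m - 1)) * (norm (fst x))\<^sup>2 + \<epsilon> powr m * (- snd x))
       \<longrightarrow> (\<forall>l>0. \<exists>C>1. \<forall>\<epsilon>\<in>{0<..1}. \<forall>x\<in>closure (Bl l) \<inter> Omega. rho \<epsilon> x \<le> C))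
  \<and> (\<forall>rho :: real \<Rightarrow> (real \<times> real) \<times> real \<Rightarrow> real.
       (\<forall>\<epsilon>\<in>{0<..1}. \<forall>x\<in>Omega. rho \<epsilon> x > 0 \<and>
          Pi_fun P a thetabar (rho \<epsilon> x) = \<epsilon> powr m * (- snd x))
       \<longrightarrow> (\<exists>C>1. \<forall>\<epsilon>\<in>{0<..1}. \<forall>x\<in>Omega. \<bar>rho \<epsilon> x\<bar> \<le> C))"
  proof (intro conjI allI impI)
  fix rho :: "real \<Rightarrow> (real \<times> real) \<times> real \<Rightarrow> real" and l :: real
  assume H: "\<forall>\<epsilon>\<in>{0<..1}. \<forall>x\<in>Omega. rho \<epsilon> x > 0 \<and>
          Pi_fun P a thetabar (rho \<epsilon> x) =
            \<epsilon> powr (2 * (m - 1)) * (norm (fst x))\<^sup>2 + \<epsilon> powr m * (- snd x)"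
    and l: "l > 0"
  have "\<exists>R\<ge>1. \<forall>r\<ge>R. Pi_fun P a thetabar r > l\<^sup>2"
    by (rule Pi_grow[OF thetabar_pos P_C1 P'_cont P'_pos P_inf])
  then obtain R where R1: "R \<ge> 1" and R2: "\<forall>r\<ge>R. Pi_fun P a thetabar r > l\<^sup>2"
    by blast
  have clo: "closure (Bl l) \<subseteq> {x. norm (fst x) \<le> l}"
  proof (rule closure_minimal)
    show "Bl l \<subseteq> {x. norm (fst x) \<le> l}" by (auto simp: Bl_def)
    show "closed {x :: (real \<times> real) \<times> real. norm (fst x) \<le> l}"
      by (intro closed_Collect_le continuous_intros)
  qed
  show "\<exists>C>1. \<forall>\<epsilon>\<in>{0<..1}. \<forall>x\<in>closure (Bl l) \<inter> Omega. rho \<epsilon> x \<le> C"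
  proof (intro exI[of _ "max R 2"] conjI ballI)
    show "1 < max R 2" by simp
    fix \<epsilon> :: real and x assume e: "\<epsilon> \<in> {0<..1}" and x: "x \<in> closure (Bl l) \<inter> Omega"
    have nx: "norm (fst x) \<le> l" using x clo by auto
    have x3: "snd x > 0" using x by (auto simp: Omega_def)
    have Hx: "Pi_fun P a thetabar (rho \<epsilon> x) =
            \<epsilon> powr (2 * (m - 1)) * (norm (fst x))\<^sup>2 + \<epsilon> powr m * (- snd x)"
      using H e x by blast
    have p1: "\<epsilon> powr (2 * (m - 1)) \<le> 1" using e m_ge by (intro powr_le1) auto
    have p2: "(norm (fst x))\<^sup>2 \<le> l\<^sup>2" using nx by (intro power_mono) auto
    have "\<epsilon> powr (2 * (m - 1)) * (norm (fst x))\<^sup>2 \<le> 1 * l\<^sup>2"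
      by (rule mult_mono[OF p1 p2]) auto
    moreover have "\<epsilon> powr m * (- snd x) \<le> 0"
      using x3 by (simp add: mult_nonneg_nonpos)
    ultimately have "Pi_fun P a thetabar (rho \<epsilon> x) \<le> l\<^sup>2" unfolding Hx by linarith
    show "rho \<epsilon> x \<le> max R 2"
    proof (rule ccontr)
      assume "\<not> rho \<epsilon> x \<le> max R 2"
      hence "R \<le> rho \<epsilon> x" by simp
      hence "Pi_fun P a thetabar (rho \<epsilon> x) > l\<^sup>2" using R2 by blast
      thus False using \<open>Pi_fun P a thetabar (rho \<epsilon> x) \<le> l\<^sup>2\<close> by simp
    qed
  qed
next
  fix rho :: "real \<Rightarrow> (real \<times> real) \<times> real \<Rightarrow> real"
  assume H: "\<forall>\<epsilon>\<in>{0<..1}. \<forall>x\<in>Omega. rho \<epsilon> x > 0 \<and>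
          Pi_fun P a thetabar (rho \<epsilon> x) = \<epsilon> powr m * (- snd x)"
  show "\<exists>C>1. \<forall>\<epsilon>\<in>{0<..1}. \<forall>x\<in>Omega. \<bar>rho \<epsilon> x\<bar> \<le> C"
  proof (intro exI[of _ 2] conjI ballI)
    show "1 < (2::real)" by simp
    fix \<epsilon> :: real and x assume e: "\<epsilon> \<in> {0<..1}" and x: "x \<in> Omega"
    have x3: "snd x > 0" using x by (auto simp: Omega_def)
    have Hx: "rho \<epsilon> x > 0" "Pi_fun P a thetabar (rho \<epsilon> x) = \<epsilon> powr m * (- snd x)"
      using H e x by blast+
    have neg: "\<epsilon> powr m * (- snd x) < 0"
      using x3 e by (simp add: mult_pos_neg)
    have "rho \<epsilon> x < 1"
    proof (rule ccontr)
      assume "\<not> rho \<epsilon> x < 1"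
      hence "Pi_fun P a thetabar (rho \<epsilon> x) \<ge> 0"
        using Pi_lower[OF thetabar_pos P_C1 P'_cont P'_pos, of "rho \<epsilon> x" a] by linarith
      thus False using Hx(2) neg by linarith
    qed
    thus "\<bar>rho \<epsilon> x\<bar> \<le> 2" using Hx by simp
  qed
qed

end
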